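(* Let $\eta\in\mathbb{C}$, $N\in\mathbb{N}^*$, $R_{a,b}(\lambda)=\lambda I_{a,b}+\eta\mathbb{P}_{a,b}$ on $\mathbb{C}^3\otimes\mathbb{C}^3$ ($\mathbb{P}$ the permutation), let $K$ be a $w$-simple $3\times3$ matrix, $\mathcal{H}=(\mathbb{C}^3)^{\otimes N}$, and $T_1^{(K)}(\lambda)=\operatorname{tr}_a\big(K_aR_{a,N}(\lambda-\xi_N)\cdots R_{a,1}(\lambda-\xi_1)\big)$. Write $K=W_KK_JW_K^{-1}$ with $K_J=\begin{pmatrix}\mathsf k_0&\mathsf y_1&0\\0&\mathsf k_1&\mathsf y_2\\0&0&\mathsf k_2\end{pmatrix}$ an upper-triangular Jordan form, where (up to permutation of basis vectors) one of the following cases holds: (i) $\mathsf k_0,\mathsf k_1,\mathsf k_2$ pairwise distinct and $\mathsf y_1=\mathsf y_2=0$; (ii) $\mathsf k_0=\mathsf k_1\neq\mathsf k_2$, $\mathsf y_1=1$, $\mathsf y_2=0$; (iii) $\mathsf k_0=\mathsf k_1=\mathsf k_2$, $\mathsf y_1=\mathsf y_2=1$. Then for almost any choice of $\langle S|\in\mathcal{H}^*$ and of the inhomogeneities $\xi_1,\dots,\xi_N$ satisfying $\xi_a\neq\xi_b+r\eta$ for all $a\neq b$ and $r\in\{-2,-1,0,1,2\}$, the set $$\langle h_1,\dots,h_N|:=\langle S|\prod_{n=1}^N\big(T_1^{(K)}(\xi_n)\big)^{h_n},\qquad(h_1,\dots,h_N)\in\{0,1,2\}^N,$$ is a basis of $\mathcal{H}^*$.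 In particular one can take $\langle S|=\big(\bigotimes_{a=1}^N(x,y,z)_a\big)\Gamma_W^{-1}$ with $\Gamma_W=\bigotimes_{a=1}^NW_{K,a}$, requiring $xyz\neq0$ in case (i), $xz\neq0$ in case (ii), and $x\neq0$ in case (iii).
   Context: A matrix is $w$-simple if each of its eigenvalues has exactly one eigenvector up to scalar multiplication. $W_{K,a}$ denotes $W_K$ acting on the $a$-th tensor factor; $(x,y,z)_a$ is a row vector in the $a$-th factor. *)

theory Defs
  imports "Jordan_Normal_Form.Char_Poly" "HOL-Probability.Probability"
begin

text \<open>Index set of the standard basis of (C^3)^{tensor N}: functions from
sites 0..N-1 to {0,1,2}, equal to 0 outside the sites.\<close>
definition idx :: "nat \<Rightarrow> (nat \<Rightarrow> nat) set" where
  "idx N = {f. (\<forall>i<N. f i < 3) \<and> (\<forall>i\<ge>N. f i = 0)}"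

definition w_simple :: "complex mat \<Rightarrow> bool" where
  "w_simple K \<longleftrightarrow> (\<forall>k v w. eigenvector K v k \<and> eigenvector K w k \<longrightarrow> (\<exists>c. w = c \<cdot>\<^sub>v v))"

definition KJ :: "complex \<Rightarrow> complex \<Rightarrow> complex \<Rightarrow> complex \<Rightarrow> complex \<Rightarrow> complex mat" where
  "KJ k0 k1 k2 y1 y2 = Matrix.mat 3 3 (\<lambda>(i,j).
     if i = j then (if i = 0 then k0 else if i = 1 then k1 else k2)
     else if i = 0 \<and> j = 1 then y1
     else if i = 1 \<and> j = 2 then y2 else 0)"

text \<open>Matrix element of R(mu) = mu I + eta P on C^3 (x) C^3:
  <b',o| R(mu) |b,i>, first factor auxiliary, second factor quantum site.\<close>
definition Rel :: "complex \<Rightarrow> complex \<Rightarrow> nat \<Rightarrow> nat \<Rightarrow> nat \<Rightarrow> nat \<Rightarrow> complex" where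
  "Rel \<eta> \<mu> b' ou b i = (if b' = b \<and> ou = i then \<mu> else 0) + (if b' = i \<and> ou = b then \<eta> else 0)"

text \<open>Transfer matrix T_1^{(K)}(lambda) = tr_a (K_a R_{a,N}(lambda-xi_N) ... R_{a,1}(lambda-xi_1)),
  as matrix elements <o| T |i> for o, i in idx N (sites 0-indexed: xi 0, ..., xi (N-1)).
  The auxiliary indices are b 0, ..., b N with trace b (N+1) = b 0.\<close>
definition transfer :: "nat \<Rightarrow> complex mat \<Rightarrow> complex \<Rightarrow> (nat \<Rightarrow> complex) \<Rightarrow> complex
    \<Rightarrow> (nat \<Rightarrow> nat) \<Rightarrow> (nat \<Rightarrow> nat) \<Rightarrow> complex" where
  "transfer N K \<eta> \<xi> lam ou i =
     (\<Sum>b\<in>idx (Suc N). K $$ (b 0, b N) *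
        (\<Prod>n<N. Rel \<eta> (lam - \<xi> n) (b (Suc n)) (ou n) (b n) (i n)))"

definition covec_act :: "nat \<Rightarrow> ((nat \<Rightarrow> nat) \<Rightarrow> (nat \<Rightarrow> nat) \<Rightarrow> complex)
    \<Rightarrow> ((nat \<Rightarrow> nat) \<Rightarrow> complex) \<Rightarrow> ((nat \<Rightarrow> nat) \<Rightarrow> complex)" where
  "covec_act N T S = (\<lambda>j. \<Sum>i\<in>idx N. S i * T i j)"

fun sov_aux :: "nat \<Rightarrow> complex mat \<Rightarrow> complex \<Rightarrow> (nat \<Rightarrow> complex) \<Rightarrow> ((nat \<Rightarrow> nat) \<Rightarrow> complex)
    \<Rightarrow> (nat \<Rightarrow> nat) \<Rightarrow> nat \<Rightarrow> ((nat \<Rightarrow> nat) \<Rightarrow> complex)" where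
  "sov_aux N K \<eta> \<xi> S h 0 = S"
| "sov_aux N K \<eta> \<xi> S h (Suc k) =
     (covec_act N (transfer N K \<eta> \<xi> (\<xi> k)) ^^ h k) (sov_aux N K \<eta> \<xi> S h k)"

definition sov_covec :: "nat \<Rightarrow> complex mat \<Rightarrow> complex \<Rightarrow> (nat \<Rightarrow> complex) \<Rightarrow> ((nat \<Rightarrow> nat) \<Rightarrow> complex)
    \<Rightarrow> (nat \<Rightarrow> nat) \<Rightarrow> ((nat \<Rightarrow> nat) \<Rightarrow> complex)" where
  "sov_covec N K \<eta> \<xi> S h = sov_aux N K \<eta> \<xi> S h N"

text \<open>A family of covectors indexed by idx N is a basis of the dual of (C^3)^{tensor N}
  (covectors are compared on idx N only).\<close>
definition covec_basis :: "nat \<Rightarrow> ((nat \<Rightarrow> nat) \<Rightarrow> (nat \<Rightarrow> nat) \<Rightarrow> complex) \<Rightarrow> bool" where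
  "covec_basis N v \<longleftrightarrow>
     (\<forall>c. (\<forall>j\<in>idx N. (\<Sum>h\<in>idx N. c h * v h j) = 0) \<longrightarrow> (\<forall>h\<in>idx N. c h = 0)) \<and>
     (\<forall>w. \<exists>c. \<forall>j\<in>idx N. w j = (\<Sum>h\<in>idx N. c h * v h j))"

definition admissible :: "nat \<Rightarrow> complex \<Rightarrow> (nat \<Rightarrow> complex) \<Rightarrow> bool" where
  "admissible N \<eta> \<xi> \<longleftrightarrow>
     (\<forall>a<N. \<forall>b<N. a \<noteq> b \<longrightarrow> (\<forall>r::int\<in>{-2..2}. \<xi> a \<noteq> \<xi> b + of_int r * \<eta>))"

text \<open><S| = (tensor_a (x,y,z)_a) Gamma_W^{-1}, Gamma_W^{-1} = tensor_a (W^{-1})_a.\<close>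
definition tensor_state :: "nat \<Rightarrow> complex mat \<Rightarrow> complex \<Rightarrow> complex \<Rightarrow> complex \<Rightarrow> ((nat \<Rightarrow> nat) \<Rightarrow> complex)" where
  "tensor_state N Wi x y z = (\<lambda>j. \<Prod>a<N.
      (\<Sum>\<alpha><3. (if \<alpha> = 0 then x else if \<alpha> = 1 then y else z) * Wi $$ (\<alpha>, j a)))"

end

theory Submission
  imports Defs
begin


inductive gpoly :: "('a \<Rightarrow> complex) set \<Rightarrow> ('a \<Rightarrow> complex) \<Rightarrow> bool" for B where
  gbase: "f \<in> B \<Longrightarrow> gpoly B f"
| gconst: "gpoly B (\<lambda>x. c)"
| gadd: "gpoly B f \<Longrightarrow> gpoly B g \<Longrightarrow> gpoly B (\<lambda>x. f x + g x)"
| gmult: "gpoly B f \<Longrightarrow> gpoly B g \<Longrightarrow> gpoly B (\<lambda>x. f x * g x)"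

lemma gpoly_sum: "finite A \<Longrightarrow> (\<And>a. a \<in> A \<Longrightarrow> gpoly B (f a)) \<Longrightarrow> gpoly B (\<lambda>x. \<Sum>a\<in>A. f a x)"
proof (induction A rule: finite_induct)
  case empty then show ?case using gconst[of B 0] by simp
next
  case (insert a A) then show ?case by (simp add: gadd)
qed

lemma gpoly_prod: "finite A \<Longrightarrow> (\<And>a. a \<in> A \<Longrightarrow> gpoly B (f a)) \<Longrightarrow> gpoly B (\<lambda>x. \<Prod>a\<in>A. f a x)"
proof (induction A rule: finite_induct)
  case empty then show ?case using gconst[of B 1] by simp
next
  case (insert a A) then show ?case by (simp add: gmult)
qed

lemma gpoly_if: "gpoly B f \<Longrightarrow> gpoly B g \<Longrightarrow> gpoly B (\<lambda>x. if P then f x else g x)"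
  by (cases P) auto

lemma gpoly_diff: "gpoly B f \<Longrightarrow> gpoly B g \<Longrightarrow> gpoly B (\<lambda>x. f x - g x)"
proof -
  assume f: "gpoly B f" and g: "gpoly B g"
  have "gpoly B (\<lambda>x. f x + (-1) * g x)" by (intro gadd gmult f g gconst)
  then show ?thesis by simp
qed

lemma gpoly_power: "gpoly B f \<Longrightarrow> gpoly B (\<lambda>x. f x ^ n)"
  by (induction n) (auto intro: gmult gconst)

lemma gpoly_subst: "gpoly B f \<Longrightarrow> (\<And>b. b \<in> B \<Longrightarrow> gpoly B' (\<lambda>y. b (\<phi> y))) \<Longrightarrow> gpoly B' (\<lambda>y. f (\<phi> y))"
  by (induction rule: gpoly.induct) (auto intro: gconst gadd gmult)

lemma gpoly_mono: "gpoly B f \<Longrightarrow> B \<subseteq> B' \<Longrightarrow> gpoly B' f"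
  by (induction rule: gpoly.induct) (auto intro: gbase gconst gadd gmult)

lemma gpoly_continuous: "gpoly B f \<Longrightarrow> (\<And>b. b \<in> B \<Longrightarrow> continuous_on UNIV b) \<Longrightarrow> continuous_on UNIV f"
  by (induction rule: gpoly.induct) (auto intro!: continuous_intros)

lemma gpoly_measurable: "gpoly B f \<Longrightarrow> (\<And>b. b \<in> B \<Longrightarrow> b \<in> borel_measurable M) \<Longrightarrow> f \<in> borel_measurable M"
  by (induction rule: gpoly.induct) auto

lemma gpoly_det: 
  assumes "\<And>i j. i < n \<Longrightarrow> j < n \<Longrightarrow> gpoly B (\<lambda>x. F x i j)"
  shows "gpoly B (\<lambda>x. Determinant.det (Matrix.mat n n (\<lambda>(i,j). F x i j)))"
proof -
  have "gpoly B (\<lambda>x. \<Sum>p\<in>{p. p permutes {0..<n}}. signof p * (\<Prod>i = 0..<n. F x i (p i)))"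
  proof (intro gpoly_sum gmult gconst gpoly_prod)
    show "finite {p. p permutes {0..<n}}" by (simp add: finite_permutations)
    fix p i assume "p \<in> {p. p permutes {0..<n}}" "i \<in> {0..<n}"
    then show "gpoly B (\<lambda>x. F x i (p i))" using assms
      by (simp add: permutes_in_image)
  qed auto
  moreover have "Determinant.det (Matrix.mat n n (\<lambda>(i,j). F x i j)) = (\<Sum>p\<in>{p. p permutes {0..<n}}. signof p * (\<Prod>i = 0..<n. F x i (p i)))" for x
    unfolding Determinant.det_def by simp
  ultimately show ?thesis by simp
qed

lemma unit_inv:
  fixes A :: "complex mat"
  assumes "A \<in> carrier_mat n n" "Determinant.det A \<noteq> 0"
  shows "\<exists>B\<in>carrier_mat n n. B * A = 1\<^sub>m n \<and> A * B = 1\<^sub>m n"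
  using det_non_zero_imp_unit[OF assms, of undefined]
  unfolding Units_def ring_mat_def by auto



definition coordset :: "'i set \<Rightarrow> (('i \<Rightarrow> complex) \<Rightarrow> complex) set" where
  "coordset I = {(\<lambda>x. x i) | i. i \<in> I}"

lemma gpoly_coord: "i \<in> I \<Longrightarrow> gpoly (coordset I) (\<lambda>x. x i)"
  by (rule gbase) (auto simp: coordset_def)

lemma gpoly_coord_dep: "gpoly (coordset I) f \<Longrightarrow> (\<forall>i\<in>I. x i = y i) \<Longrightarrow> f x = f y"
  by (induction rule: gpoly.induct) (auto simp: coordset_def)

lemma gpoly_decomp:
  assumes "gpoly (coordset (insert i I)) f"
  shows "\<exists>p. (\<forall>k. gpoly (coordset I) (\<lambda>x. coeff (p x) k)) \<and> (\<forall>x. f x = poly (p x) (x i))"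
  using assms
proof (induction rule: gpoly.induct)
  case (gbase f)
  then obtain j where j: "j \<in> insert i I" "f = (\<lambda>x. x j)" by (auto simp: coordset_def)
  show ?case
  proof (cases "j = i")
    case True
    show ?thesis
      apply (rule exI[of _ "\<lambda>x. [:0,1:]"])
      using j True by (auto intro: gconst)
  next
    case False
    have "gpoly (coordset I) (\<lambda>x. coeff [:x j:] k)" for k
    proof (cases k)
      case 0 then show ?thesis using j False by (auto intro: gpoly_coord)
    next
      case (Suc m) then show ?thesis by (auto intro: gconst)
    qed
    then show ?thesis
      apply (intro exI[of _ "\<lambda>x. [:x j:]"])
      using j by auto
  qed
next
  case (gconst c)
  have "gpoly (coordset I) (\<lambda>x. coeff [:c:] k)" for k
    by (rule gconst)
  then show ?case by (intro exI[of _ "\<lambda>x. [:c:]"]) auto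
next
  case (gadd f g)
  then obtain p q where p: "\<forall>k. gpoly (coordset I) (\<lambda>x. coeff (p x) k)" "\<forall>x. f x = poly (p x) (x i)"
    and q: "\<forall>k. gpoly (coordset I) (\<lambda>x. coeff (q x) k)" "\<forall>x. g x = poly (q x) (x i)" by blast
  show ?case
    apply (rule exI[of _ "\<lambda>x. p x + q x"])
    using p q gpoly.gadd[OF p(1)[rule_format] q(1)[rule_format]] by auto
next
  case (gmult f g)
  then obtain p q where p: "\<forall>k. gpoly (coordset I) (\<lambda>x. coeff (p x) k)" "\<forall>x. f x = poly (p x) (x i)"
    and q: "\<forall>k. gpoly (coordset I) (\<lambda>x. coeff (q x) k)" "\<forall>x. g x = poly (q x) (x i)" by blast
  show ?case
    apply (rule exI[of _ "\<lambda>x. p x * q x"])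
    using p q by (auto simp: coeff_mult intro!: gpoly_sum gpoly.gmult)
qed

lemma gpoly_coord_measurable:
  assumes "gpoly (coordset I) f"
  shows "f \<in> borel_measurable (PiM I (\<lambda>_. lborel))"
  using assms
proof (rule gpoly_measurable)
  fix b assume "b \<in> coordset I"
  then obtain i where "i \<in> I" "b = (\<lambda>x. x i)" by (auto simp: coordset_def)
  then show "b \<in> borel_measurable (PiM I (\<lambda>_. lborel))"
    using measurable_component_singleton[of i I "\<lambda>_. lborel"] by (simp add: measurable_lborel1)
qed

lemma AE_poly_nonzero:
  fixes q :: "complex poly"
  assumes "q \<noteq> 0"
  shows "AE t in lborel. poly q t \<noteq> 0"
proof (rule AE_I')
  show "{t. poly q t = 0} \<in> null_sets lborel"
    by (rule finite_imp_null_set_lborel) (rule poly_roots_finite[OF assms])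
qed auto

lemma poly_ae:
  fixes f :: "('i \<Rightarrow> complex) \<Rightarrow> complex"
  assumes "finite I" "gpoly (coordset I) f" "f x0 \<noteq> 0"
  shows "AE x in PiM I (\<lambda>_. lborel). f x \<noteq> 0"
  using assms
proof (induction I arbitrary: f x0 rule: finite_induct)
  case empty
  have "f x = f x0" for x by (rule gpoly_coord_dep[OF empty(1)]) auto
  then show ?case using empty by (intro AE_I2) metis
next
  case (insert i I)
  interpret PS: product_sigma_finite "\<lambda>_. lborel :: complex measure"
    by (simp add: product_sigma_finite_def lborel.sigma_finite_measure_axioms)
  interpret PI: finite_product_sigma_finite "\<lambda>_. lborel :: complex measure" I
    by standard (simp add: insert)
  interpret P1: finite_product_sigma_finite "\<lambda>_. lborel :: complex measure" "{i}"
    by standard simp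
  interpret PP: pair_sigma_finite "PiM I (\<lambda>_. lborel :: complex measure)" "PiM {i} (\<lambda>_. lborel :: complex measure)"
    by standard
  obtain p where p: "\<And>k. gpoly (coordset I) (\<lambda>x. coeff (p x) k)" "\<And>x. f x = poly (p x) (x i)"
    using gpoly_decomp[OF insert(4)] by blast
  have "p x0 \<noteq> 0" using insert(5) p(2) by auto
  then obtain k where k: "coeff (p x0) k \<noteq> 0" by (meson leading_coeff_neq_0)
  have IH: "AE x in PiM I (\<lambda>_. lborel). coeff (p x) k \<noteq> 0"
    by (rule insert(3)[OF p(1) k])
  have pind: "p (x(i := t)) = p x" for x t
    by (rule poly_eqI, rule gpoly_coord_dep[OF p(1)]) (use insert(2) in auto)
  have fm[measurable]: "f \<in> borel_measurable (PiM (insert i I) (\<lambda>_. lborel))"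
    by (rule gpoly_coord_measurable[OF insert(4)])
  have fm2: "f \<in> borel_measurable (PiM (I \<union> {i}) (\<lambda>_. lborel))" using fm by simp
  have D: "distr (PiM I (\<lambda>_. lborel) \<Otimes>\<^sub>M PiM {i} (\<lambda>_. lborel)) (PiM (I \<union> {i}) (\<lambda>_. lborel)) (merge I {i})
       = PiM (I \<union> {i}) (\<lambda>_. lborel :: complex measure)"
    by (rule PS.distr_merge) (use insert in auto)
  have DS: "distr (PiM {i} (\<lambda>_. lborel)) lborel (\<lambda>x. x i) = (lborel :: complex measure)"
    using PS.distr_singleton[of i] by simp
  have "AE y in PiM I (\<lambda>_. lborel) \<Otimes>\<^sub>M PiM {i} (\<lambda>_. lborel). f (merge I {i} y) \<noteq> 0"
  proof (rule PP.AE_pair_measure)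
    show "{x \<in> space (PiM I (\<lambda>_. lborel) \<Otimes>\<^sub>M PiM {i} (\<lambda>_. lborel)). f (merge I {i} x) \<noteq> 0}
       \<in> sets (PiM I (\<lambda>_. lborel) \<Otimes>\<^sub>M PiM {i} (\<lambda>_. lborel))"
      using fm2 by measurable
    show "AE x in PiM I (\<lambda>_. lborel). AE y in PiM {i} (\<lambda>_. lborel). f (merge I {i} (x, y)) \<noteq> 0"
    proof (rule AE_mp[OF IH], rule AE_I2, intro ballI impI)
      fix x assume cx: "coeff (p x) k \<noteq> 0"
      then have px: "p x \<noteq> 0" by auto
      have e: "f (merge I {i} (x, y)) = poly (p x) (y i)" for y
      proof -
        have "f (merge I {i} (x, y)) = f (x(i := y i))"
          by (rule gpoly_coord_dep[OF insert(4)]) (use insert(2) in \<open>auto simp: merge_def\<close>)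
        also have "\<dots> = poly (p x) (y i)" using p(2) pind by simp
        finally show ?thesis .
      qed
      have "AE t in distr (PiM {i} (\<lambda>_. lborel)) lborel (\<lambda>x. x i). poly (p x) t \<noteq> 0"
        unfolding DS by (rule AE_poly_nonzero[OF px])
      then have "AE y in PiM {i} (\<lambda>_. lborel). poly (p x) (y i) \<noteq> 0"
      proof (subst (asm) AE_distr_iff)
        have pm[measurable]: "(\<lambda>t. poly (p x) t) \<in> borel_measurable borel"
          by (intro borel_measurable_continuous_onI continuous_intros)
        show "{t \<in> space lborel. poly (p x) t \<noteq> 0} \<in> sets lborel" by measurable
      qed auto
      then show "AE y in PiM {i} (\<lambda>_. lborel). f (merge I {i} (x, y)) \<noteq> 0"
        using e by simp
    qed
  qed
  then have "AE y in distr (PiM I (\<lambda>_. lborel) \<Otimes>\<^sub>M PiM {i} (\<lambda>_. lborel)) (PiM (I \<union> {i}) (\<lambda>_. lborel)) (merge I {i}). f y \<noteq> 0"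
    by (subst AE_distr_iff) (use fm2 measurable_merge[of I "{i}" "\<lambda>_. lborel"] in auto)
  then have "AE x in PiM (I \<union> {i}) (\<lambda>_. lborel). f x \<noteq> 0" by (simp only: D)
  moreover have "I \<union> {i} = insert i I" by auto
  ultimately show ?case by (simp only:)
qed



lemma finite_idx: "finite (idx N)"
  unfolding idx_def
  by (rule finite_subset[OF _ finite_set_of_finite_funs[of "{..<N}" "{..<3::nat}" 0]]) auto

definition en :: "nat \<Rightarrow> nat \<Rightarrow> (nat \<Rightarrow> nat)" where
  "en N = (SOME e. bij_betw e {0..<card (idx N)} (idx N))"

lemma en_bij: "bij_betw (en N) {0..<card (idx N)} (idx N)"
  unfolding en_def by (rule someI_ex[OF ex_bij_betw_nat_finite[OF finite_idx]])

lemma en_in: "r < card (idx N) \<Longrightarrow> en N r \<in> idx N"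
  using en_bij[of N] by (auto simp: bij_betw_def)

lemma en_inj: "r < card (idx N) \<Longrightarrow> r' < card (idx N) \<Longrightarrow> en N r = en N r' \<longleftrightarrow> r = r'"
  using en_bij[of N] by (auto simp: bij_betw_def inj_on_def)

lemma en_surj: "h \<in> idx N \<Longrightarrow> \<exists>r<card (idx N). h = en N r"
  using en_bij[of N] by (force simp: bij_betw_def)

lemma sum_idx_en: "(\<Sum>h\<in>idx N. g h) = (\<Sum>r<card (idx N). g (en N r))"
  using sum.reindex_bij_betw[OF en_bij[of N], of g] by (simp add: atLeast0LessThan)

definition Amat :: "nat \<Rightarrow> ((nat \<Rightarrow> nat) \<Rightarrow> (nat \<Rightarrow> nat) \<Rightarrow> complex) \<Rightarrow> complex mat" where
  "Amat N v = Matrix.mat (card (idx N)) (card (idx N)) (\<lambda>(r,c). v (en N r) (en N c))"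

definition spans :: "nat \<Rightarrow> ((nat \<Rightarrow> nat) \<Rightarrow> (nat \<Rightarrow> nat) \<Rightarrow> complex) \<Rightarrow> bool" where
  "spans N v \<longleftrightarrow> (\<forall>w. \<exists>c. \<forall>j\<in>idx N. w j = (\<Sum>h\<in>idx N. c h * v h j))"

lemma spans_det:
  assumes "spans N v"
  shows "Determinant.det (Amat N v) \<noteq> 0"
proof -
  let ?n = "card (idx N)"
  from assms obtain C where C: "\<And>w j. j \<in> idx N \<Longrightarrow> w j = (\<Sum>h\<in>idx N. C w h * v h j)"
    unfolding spans_def by metis
  define w where "w r = (\<lambda>j. if j = en N r then 1 else 0 :: complex)" for r
  define Cm where "Cm = Matrix.mat ?n ?n (\<lambda>(r,q). C (w r) (en N q))"
  have A: "Amat N v \<in> carrier_mat ?n ?n" by (simp add: Amat_def)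
  have Cc: "Cm \<in> carrier_mat ?n ?n" by (simp add: Cm_def)
  have "Cm * Amat N v = 1\<^sub>m ?n"
  proof (rule eq_matI)
    fix r r' assume rr: "r < dim_row (1\<^sub>m ?n)" "r' < dim_col (1\<^sub>m ?n)"
    have "(Cm * Amat N v) $$ (r, r') = (\<Sum>q<?n. C (w r) (en N q) * v (en N q) (en N r'))"
      using rr by (simp add: Cm_def Amat_def scalar_prod_def atLeast0LessThan)
    also have "\<dots> = (\<Sum>h\<in>idx N. C (w r) h * v h (en N r'))"
      by (rule sum_idx_en[symmetric])
    also have "\<dots> = w r (en N r')"
      using C[of "en N r'" "w r"] en_in rr by simp
    also have "\<dots> = 1\<^sub>m ?n $$ (r, r')"
      using rr en_inj by (auto simp: w_def)
    finally show "(Cm * Amat N v) $$ (r, r') = 1\<^sub>m ?n $$ (r, r')" .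
  qed (use A Cc in auto)
  then have "Determinant.det Cm * Determinant.det (Amat N v) = 1"
    using det_mult[OF Cc A] by simp
  then show ?thesis by auto
qed

lemma det_basis:
  assumes "Determinant.det (Amat N v) \<noteq> 0"
  shows "covec_basis N v"
proof -
  let ?n = "card (idx N)"
  have A: "Amat N v \<in> carrier_mat ?n ?n" by (simp add: Amat_def)
  obtain B where B: "B \<in> carrier_mat ?n ?n" "B * Amat N v = 1\<^sub>m ?n" "Amat N v * B = 1\<^sub>m ?n"
    using unit_inv[OF A assms] by blast
  have indep: "\<forall>h\<in>idx N. c h = 0" if c: "\<forall>j\<in>idx N. (\<Sum>h\<in>idx N. c h * v h j) = 0" for c
  proof -
    define U where "U = Matrix.mat 1 ?n (\<lambda>(_,r). c (en N r))"
    have Uc: "U \<in> carrier_mat 1 ?n" by (simp add: U_def)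
    have UA: "U * Amat N v = 0\<^sub>m 1 ?n"
    proof (rule eq_matI)
      fix i q assume iq: "i < dim_row (0\<^sub>m 1 ?n)" "q < dim_col (0\<^sub>m 1 ?n)"
      have "(U * Amat N v) $$ (i, q) = (\<Sum>r<?n. c (en N r) * v (en N r) (en N q))"
        using iq by (simp add: U_def Amat_def scalar_prod_def atLeast0LessThan)
      also have "\<dots> = (\<Sum>h\<in>idx N. c h * v h (en N q))"
        by (rule sum_idx_en[symmetric])
      also have "\<dots> = 0" using c en_in iq by simp
      finally show "(U * Amat N v) $$ (i, q) = 0\<^sub>m 1 ?n $$ (i, q)" using iq by simp
    qed (use A Uc in auto)
    have "U = U * (Amat N v * B)" using Uc B by simp
    also have "\<dots> = (U * Amat N v) * B" using Uc A B by (simp add: assoc_mult_mat)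
    also have "\<dots> = 0\<^sub>m 1 ?n" using UA B by simp
    finally have U0: "U = 0\<^sub>m 1 ?n" .
    show ?thesis
    proof
      fix h assume "h \<in> idx N"
      then obtain r where r: "r < ?n" "h = en N r" using en_surj by blast
      have "U $$ (0, r) = 0" using U0 r by simp
      then show "c h = 0" using r by (simp add: U_def)
    qed
  qed
  have span: "\<exists>c. \<forall>j\<in>idx N. w j = (\<Sum>h\<in>idx N. c h * v h j)" for w
  proof -
    define Wm where "Wm = Matrix.mat 1 ?n (\<lambda>(_,r). w (en N r))"
    have Wc: "Wm \<in> carrier_mat 1 ?n" by (simp add: Wm_def)
    define Cm where "Cm = Wm * B"
    have CA: "Cm * Amat N v = Wm"
    proof -
      have "Cm * Amat N v = Wm * (B * Amat N v)" unfolding Cm_def using Wc A B by (simp add: assoc_mult_mat)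
      then show ?thesis using B Wc by simp
    qed
    define c where "c h = Cm $$ (0, inv_into {0..<?n} (en N) h)" for h
    have cen: "c (en N r) = Cm $$ (0, r)" if "r < ?n" for r
      unfolding c_def using en_bij[of N] that
      by (subst inv_into_f_f) (auto simp: bij_betw_def)
    show ?thesis
    proof (intro exI ballI)
      fix j assume j: "j \<in> idx N"
      then obtain q where q: "q < ?n" "j = en N q" using en_surj by blast
      have "w j = Wm $$ (0, q)" using q by (simp add: Wm_def)
      also have "\<dots> = (Cm * Amat N v) $$ (0, q)" using CA by simp
      also have "\<dots> = (\<Sum>r<?n. Cm $$ (0, r) * v (en N r) (en N q))"
        using q B Wc by (simp add: Cm_def Amat_def scalar_prod_def atLeast0LessThan)
      also have "\<dots> = (\<Sum>r<?n. c (en N r) * v (en N r) (en N q))"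
        using cen by simp
      also have "\<dots> = (\<Sum>h\<in>idx N. c h * v h j)"
        using q by (simp add: sum_idx_en)
      finally show "w j = (\<Sum>h\<in>idx N. c h * v h j)" .
    qed
  qed
  show ?thesis unfolding covec_basis_def using indep span by blast
qed

lemma det_spans: "Determinant.det (Amat N v) \<noteq> 0 \<Longrightarrow> spans N v"
  using det_basis[of N v] unfolding covec_basis_def spans_def by blast

lemma spans_scale:
  assumes "spans N v" "\<And>h. h \<in> idx N \<Longrightarrow> a h \<noteq> 0"
  shows "spans N (\<lambda>h j. a h * v h j)"
  unfolding spans_def
proof
  fix w
  obtain c where c: "\<forall>j\<in>idx N. w j = (\<Sum>h\<in>idx N. c h * v h j)" using assms(1) unfolding spans_def by blast
  show "\<exists>c. \<forall>j\<in>idx N. w j = (\<Sum>h\<in>idx N. c h * (a h * v h j))"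
    apply (rule exI[of _ "\<lambda>h. c h / a h"])
    using c assms(2) by simp
qed



fun sovg :: "nat \<Rightarrow> (nat \<Rightarrow> (nat \<Rightarrow> nat) \<Rightarrow> (nat \<Rightarrow> nat) \<Rightarrow> complex) \<Rightarrow> ((nat \<Rightarrow> nat) \<Rightarrow> complex)
    \<Rightarrow> (nat \<Rightarrow> nat) \<Rightarrow> nat \<Rightarrow> ((nat \<Rightarrow> nat) \<Rightarrow> complex)" where
  "sovg N T S h 0 = S"
| "sovg N T S h (Suc k) = (covec_act N (T k) ^^ h k) (sovg N T S h k)"

lemma sov_aux_sovg: "sov_aux N K \<eta> \<xi> S h k = sovg N (\<lambda>k. transfer N K \<eta> \<xi> (\<xi> k)) S h k"
  by (induction k) auto

lemma sovg_cong: "(\<And>k. k < M \<Longrightarrow> T k = T' k) \<Longrightarrow> sovg N T S h M = sovg N T' S h M"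
  by (induction M) auto

lemma gpoly_covec_act:
  assumes "\<And>i. i \<in> idx N \<Longrightarrow> gpoly B (\<lambda>y. S y i)" "\<And>i. i \<in> idx N \<Longrightarrow> gpoly B (\<lambda>y. T y i j)"
  shows "gpoly B (\<lambda>y. covec_act N (T y) (S y) j)"
  unfolding covec_act_def using assms by (auto intro!: gpoly_sum gpoly.gmult finite_idx)

lemma gpoly_pow:
  assumes "\<And>i j. i \<in> idx N \<Longrightarrow> j \<in> idx N \<Longrightarrow> gpoly B (\<lambda>y. T y i j)" "\<And>i. i \<in> idx N \<Longrightarrow> gpoly B (\<lambda>y. S y i)"
  shows "j \<in> idx N \<Longrightarrow> gpoly B (\<lambda>y. ((covec_act N (T y)) ^^ m) (S y) j)"
proof (induction m arbitrary: j)
  case 0 then show ?case using assms by simp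
next
  case (Suc m)
  show ?case using Suc assms by (simp add: gpoly_covec_act)
qed

lemma gpoly_sovg:
  assumes "\<And>k i j. k < M \<Longrightarrow> i \<in> idx N \<Longrightarrow> j \<in> idx N \<Longrightarrow> gpoly B (\<lambda>y. T y k i j)"
    "\<And>i. i \<in> idx N \<Longrightarrow> gpoly B (\<lambda>y. S y i)"
  shows "j \<in> idx N \<Longrightarrow> gpoly B (\<lambda>y. sovg N (T y) (S y) h M j)"
  using assms(1)
proof (induction M arbitrary: j)
  case 0 then show ?case using assms(2) by simp
next
  case (Suc M)
  have "gpoly B (\<lambda>y. ((covec_act N (T y M)) ^^ h M) (sovg N (T y) (S y) h M) j)"
    by (rule gpoly_pow[where T="\<lambda>y. T y M"]) (use Suc in auto)
  then show ?case by simp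
qed

lemma gpoly_Amat_det:
  assumes "\<And>h j. h \<in> idx N \<Longrightarrow> j \<in> idx N \<Longrightarrow> gpoly B (\<lambda>y. v y h j)"
  shows "gpoly B (\<lambda>y. Determinant.det (Amat N (v y)))"
  unfolding Amat_def by (rule gpoly_det) (simp add: assms en_in)

lemma gpoly_Rel:
  assumes "gpoly B e" "gpoly B m"
  shows "gpoly B (\<lambda>y. Rel (e y) (m y) b' ou b i)"
  unfolding Rel_def by (intro gpoly.gadd gpoly_if assms gpoly.gconst)

lemma gpoly_transfer:
  assumes "gpoly B e" "\<And>n. n < N \<Longrightarrow> gpoly B (\<lambda>y. xi y n)" "gpoly B lam"
  shows "gpoly B (\<lambda>y. transfer N K (e y) (xi y) (lam y) ou i)"
  unfolding transfer_def
  by (intro gpoly_sum gpoly_prod gpoly.gmult gpoly.gconst gpoly_Rel gpoly_diff assms finite_idx) auto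

definition Dfun :: "nat \<Rightarrow> complex mat \<Rightarrow> complex \<Rightarrow> (nat \<Rightarrow> complex) \<Rightarrow> ((nat \<Rightarrow> nat) \<Rightarrow> complex) \<Rightarrow> complex" where
  "Dfun N K \<eta> \<xi> S = Determinant.det (Amat N (sov_covec N K \<eta> \<xi> S))"

lemma gpoly_Dfun:
  assumes "\<And>n. n < N \<Longrightarrow> gpoly B (\<lambda>y. xi y n)" "\<And>i. i \<in> idx N \<Longrightarrow> gpoly B (\<lambda>y. S y i)"
  shows "gpoly B (\<lambda>y. Dfun N K \<eta> (xi y) (S y))"
  unfolding Dfun_def sov_covec_def sov_aux_sovg
proof (rule gpoly_Amat_det, rule gpoly_sovg[where T="\<lambda>y k. transfer N K \<eta> (xi y) (xi y k)"])
  fix k i j assume "k < N"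
  then show "gpoly B (\<lambda>y. transfer N K \<eta> (xi y) (xi y k) i j)"
    by (intro gpoly_transfer gpoly.gconst assms)
qed (use assms in auto)



lemma covec_act_cong2:
  "(\<And>i. i \<in> idx N \<Longrightarrow> S i = S' i \<and> T i j = T' i j) \<Longrightarrow> covec_act N T S j = covec_act N T' S' j"
  unfolding covec_act_def by (rule sum.cong) auto

lemma pow_cong2:
  assumes "\<And>i j. i \<in> idx N \<Longrightarrow> j \<in> idx N \<Longrightarrow> T i j = T' i j" "\<And>i. i \<in> idx N \<Longrightarrow> S i = S' i"
  shows "j \<in> idx N \<Longrightarrow> (covec_act N T ^^ m) S j = (covec_act N T' ^^ m) S' j"
proof (induction m arbitrary: j)
  case 0 then show ?case using assms by simp
next
  case (Suc m)
  have "covec_act N T ((covec_act N T ^^ m) S) j = covec_act N T' ((covec_act N T' ^^ m) S') j"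
    by (rule covec_act_cong2) (use Suc assms in auto)
  then show ?case by simp
qed

lemma sovg_cong2:
  assumes "\<And>k i j. k < M \<Longrightarrow> i \<in> idx N \<Longrightarrow> j \<in> idx N \<Longrightarrow> T k i j = T' k i j"
    "\<And>i. i \<in> idx N \<Longrightarrow> S i = S' i"
  shows "j \<in> idx N \<Longrightarrow> sovg N T S h M j = sovg N T' S' h M j"
  using assms(1)
proof (induction M arbitrary: j)
  case 0 then show ?case using assms(2) by simp
next
  case (Suc M)
  have "(covec_act N (T M) ^^ h M) (sovg N T S h M) j = (covec_act N (T' M) ^^ h M) (sovg N T' S' h M) j"
    by (rule pow_cong2) (use Suc in auto)
  then show ?case by simp
qed

lemma covec_act_scale:
  "covec_act N (\<lambda>i j. c * T i j) (\<lambda>i. a * S i) = (\<lambda>j. c * a * covec_act N T S j)"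
  unfolding covec_act_def by (rule ext) (simp add: sum_distrib_left mult.assoc mult.left_commute)

lemma pow_scale:
  "(covec_act N (\<lambda>i j. c * T i j) ^^ m) (\<lambda>i. a * S i) = (\<lambda>j. c ^ m * a * (covec_act N T ^^ m) S j)"
proof (induction m)
  case 0 then show ?case by simp
next
  case (Suc m)
  show ?case using covec_act_scale[of N c T "c ^ m * a" "(covec_act N T ^^ m) S"] Suc
    by (simp add: ac_simps)
qed

lemma sovg_scale:
  "sovg N (\<lambda>k i j. c k * T k i j) S h M = (\<lambda>j. (\<Prod>m<M. c m ^ h m) * sovg N T S h M j)"
proof (induction M)
  case 0 then show ?case by simp
next
  case (Suc M)
  show ?case using pow_scale[where N=N and c="c M" and T="T M" and m="h M" and a="\<Prod>m<M. c m ^ h m" and S="sovg N T S h M"] Suc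
    by (simp add: ac_simps)
qed

lemma Rel_scale_aux: "(t::complex) \<noteq> 0 \<Longrightarrow> (if A then t*\<mu> else 0) + (if B then \<eta> else 0) = t * ((if A then \<mu> else 0) + (if B then \<eta>/t else 0))"
  by (cases A; cases B) (simp_all add: distrib_left)
lemma Rel_scale: "t \<noteq> 0 \<Longrightarrow> Rel \<eta> (t * \<mu>) b' ou b i = t * Rel (\<eta> / t) \<mu> b' ou b i"
  unfolding Rel_def by (rule Rel_scale_aux)

lemma Rel_zero_aux: "(if A then (0::complex) else 0) + (if B then \<epsilon> else 0) = \<epsilon> * (if B then 1 else 0)"
  by (cases B) simp_all
lemma Rel_zero: "Rel \<epsilon> 0 b' ou b i = \<epsilon> * (if b' = i \<and> ou = b then 1 else 0)"
  unfolding Rel_def by (rule Rel_zero_aux)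

lemma transfer_scale:
  assumes "t \<noteq> 0"
  shows "transfer N K \<eta> (\<lambda>n. t * \<zeta> n) (t * lam) ou i = t ^ N * transfer N K (\<eta> / t) \<zeta> lam ou i"
proof -
  have "(\<Prod>n<N. Rel \<eta> (t * lam - t * \<zeta> n) (b (Suc n)) (ou n) (b n) (i n))
      = t ^ N * (\<Prod>n<N. Rel (\<eta> / t) (lam - \<zeta> n) (b (Suc n)) (ou n) (b n) (i n))" for b
  proof -
    have "(\<Prod>n<N. Rel \<eta> (t * lam - t * \<zeta> n) (b (Suc n)) (ou n) (b n) (i n))
       = (\<Prod>n<N. t * Rel (\<eta> / t) (lam - \<zeta> n) (b (Suc n)) (ou n) (b n) (i n))"
      by (rule prod.cong[OF refl]) (simp only: right_diff_distrib[symmetric] Rel_scale[OF assms])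
    also have "\<dots> = t ^ N * (\<Prod>n<N. Rel (\<eta> / t) (lam - \<zeta> n) (b (Suc n)) (ou n) (b n) (i n))"
      by (simp add: prod.distrib)
    finally show ?thesis .
  qed
  then show ?thesis unfolding transfer_def by (simp add: sum_distrib_left mult.left_commute)
qed

definition Vt :: "nat \<Rightarrow> complex mat \<Rightarrow> complex \<Rightarrow> (nat \<Rightarrow> complex) \<Rightarrow> nat \<Rightarrow> (nat \<Rightarrow> nat) \<Rightarrow> (nat \<Rightarrow> nat) \<Rightarrow> complex" where
  "Vt N K \<epsilon> \<zeta> k ou i = (\<Sum>b\<in>idx (Suc N). K $$ (b 0, b N) *
     (\<Prod>n<N. if n = k then (if b (Suc n) = i n \<and> ou n = b n then 1 else 0)
             else Rel \<epsilon> (\<zeta> k - \<zeta> n) (b (Suc n)) (ou n) (b n) (i n)))"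

lemma transfer_V:
  assumes "k < N"
  shows "transfer N K \<epsilon> \<zeta> (\<zeta> k) ou i = \<epsilon> * Vt N K \<epsilon> \<zeta> k ou i"
proof -
  have "(\<Prod>n<N. Rel \<epsilon> (\<zeta> k - \<zeta> n) (b (Suc n)) (ou n) (b n) (i n)) =
     \<epsilon> * (\<Prod>n<N. if n = k then (if b (Suc n) = i n \<and> ou n = b n then 1 else 0)
             else Rel \<epsilon> (\<zeta> k - \<zeta> n) (b (Suc n)) (ou n) (b n) (i n))" for b
  proof -
    have "(\<Prod>n<N. Rel \<epsilon> (\<zeta> k - \<zeta> n) (b (Suc n)) (ou n) (b n) (i n)) =
      (\<Prod>n<N. (if n = k then \<epsilon> else 1) * (if n = k then (if b (Suc n) = i n \<and> ou n = b n then 1 else 0)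
             else Rel \<epsilon> (\<zeta> k - \<zeta> n) (b (Suc n)) (ou n) (b n) (i n)))"
    proof (rule prod.cong[OF refl])
      fix n assume "n \<in> {..<N}"
      show "Rel \<epsilon> (\<zeta> k - \<zeta> n) (b (Suc n)) (ou n) (b n) (i n) = (if n = k then \<epsilon> else 1) * (if n = k then (if b (Suc n) = i n \<and> ou n = b n then 1 else 0)
             else Rel \<epsilon> (\<zeta> k - \<zeta> n) (b (Suc n)) (ou n) (b n) (i n))"
        by (cases "n = k") (simp_all only: if_True if_False Rel_zero diff_self mult_1 simp_thms(6))
    qed
    also have "\<dots> = (\<Prod>n<N. (if n = k then \<epsilon> else 1)) * (\<Prod>n<N. if n = k then (if b (Suc n) = i n \<and> ou n = b n then 1 else 0)
             else Rel \<epsilon> (\<zeta> k - \<zeta> n) (b (Suc n)) (ou n) (b n) (i n))"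
      by (rule prod.distrib)
    also have "(\<Prod>n<N. (if n = k then \<epsilon> else 1)) = \<epsilon>" using assms by (simp add: prod.delta)
    finally show ?thesis .
  qed
  then show ?thesis unfolding transfer_def Vt_def by (simp add: sum_distrib_left mult.left_commute)
qed



definition V0 :: "nat \<Rightarrow> complex mat \<Rightarrow> nat \<Rightarrow> (nat \<Rightarrow> nat) \<Rightarrow> (nat \<Rightarrow> nat) \<Rightarrow> complex" where
  "V0 N K k ou i = K $$ (ou k, i k) * (\<Prod>n\<in>{..<N}-{k}. if ou n = i n then 1 else 0)"

definition Pz :: "(nat \<Rightarrow> complex) \<Rightarrow> nat \<Rightarrow> nat \<Rightarrow> complex" where
  "Pz \<zeta> N k = (\<Prod>n\<in>{..<N}-{k}. \<zeta> k - \<zeta> n)"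

lemma Rel_eta0_aux: "(if A then (\<mu>::complex) else 0) + (if B then 0 else 0) = (if A then \<mu> else 0)"
  by simp

lemma Rel_eta0: "Rel 0 \<mu> b' ou b i = (if b' = b \<and> ou = i then \<mu> else 0)"
  unfolding Rel_def by (rule Rel_eta0_aux)

lemma idxD: "j \<in> idx N \<Longrightarrow> a < N \<Longrightarrow> j a < 3" and idxD2: "j \<in> idx N \<Longrightarrow> N \<le> a \<Longrightarrow> j a = 0"
  unfolding idx_def by auto

lemma Vt_zero:
  assumes k: "k < N" and ou: "ou \<in> idx N" and i: "i \<in> idx N"
  shows "Vt N K 0 \<zeta> k ou i = Pz \<zeta> N k * V0 N K k ou i"
proof -
  define bs where "bs n = (if n \<le> k then ou k else if n \<le> N then i k else 0)" for n
  have bs_in: "bs \<in> idx (Suc N)"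
    using idxD[OF ou k] idxD[OF i k] k unfolding idx_def bs_def by auto
  define G where "G b n = (if n = k then (if b (Suc n) = i n \<and> ou n = b n then 1 else 0)
             else Rel 0 (\<zeta> k - \<zeta> n) (b (Suc n)) (ou n) (b n) (i n))" for b n
  have zero: "(\<Prod>n<N. G b n) = 0" if b: "b \<in> idx (Suc N)" "b \<noteq> bs" for b
  proof (rule ccontr)
    assume "(\<Prod>n<N. G b n) \<noteq> 0"
    then have nz: "\<And>n. n < N \<Longrightarrow> G b n \<noteq> 0" by auto
    have c1: "b (Suc k) = i k" "ou k = b k"
      using nz[OF k] unfolding G_def by (auto split: if_splits)
    have c2: "b (Suc n) = b n" if "n < N" "n \<noteq> k" for n
      using nz[OF that(1)] that(2) unfolding G_def by (auto simp: Rel_eta0 split: if_splits)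
    have low: "m \<le> k \<Longrightarrow> b m = b 0" for m
    proof (induction m)
      case (Suc m) then show ?case using c2[of m] k by auto
    qed simp
    have high: "m \<le> N \<Longrightarrow> Suc k \<le> m \<Longrightarrow> b m = b (Suc k)" for m
    proof (induction m)
      case (Suc m)
      show ?case
      proof (cases "Suc m = Suc k")
        case False
        then have "Suc k \<le> m" using Suc by auto
        then show ?thesis using Suc c2[of m] by auto
      qed simp
    qed simp
    have "b = bs"
    proof
      fix m
      show "b m = bs m"
      proof (cases "m \<le> k")
        case True
        then show ?thesis using low[OF True] low[of k] c1 by (simp add: bs_def)
      next
        case False
        show ?thesis
        proof (cases "m \<le> N")
          case True
          then show ?thesis using high[OF True] False c1 by (simp add: bs_def)
        next
          case False
          then show ?thesis using idxD2[OF b(1), of m] \<open>\<not> m \<le> k\<close> by (simp add: bs_def)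
        qed
      qed
    qed
    then show False using b by simp
  qed
  have "Vt N K 0 \<zeta> k ou i = (\<Sum>b\<in>idx (Suc N). K $$ (b 0, b N) * (\<Prod>n<N. G b n))"
    unfolding Vt_def G_def by simp
  also have "\<dots> = K $$ (bs 0, bs N) * (\<Prod>n<N. G bs n)"
    by (subst sum.remove[OF finite_idx bs_in]) (simp add: zero)
  also have "K $$ (bs 0, bs N) = K $$ (ou k, i k)" using k by (simp add: bs_def)
  also have "(\<Prod>n<N. G bs n) = G bs k * (\<Prod>n\<in>{..<N}-{k}. G bs n)"
    by (rule prod.remove) (use k in auto)
  also have "G bs k = 1" using k by (simp add: G_def bs_def)
  also have "(\<Prod>n\<in>{..<N}-{k}. G bs n) = (\<Prod>n\<in>{..<N}-{k}. (\<zeta> k - \<zeta> n) * (if ou n = i n then 1 else 0))"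
  proof (rule prod.cong[OF refl])
    fix n assume n: "n \<in> {..<N}-{k}"
    have "bs (Suc n) = bs n" using n by (auto simp: bs_def)
    then show "G bs n = (\<zeta> k - \<zeta> n) * (if ou n = i n then 1 else 0)"
      using n by (simp add: G_def Rel_eta0)
  qed
  also have "\<dots> = Pz \<zeta> N k * (\<Prod>n\<in>{..<N}-{k}. if ou n = i n then 1 else 0)"
    unfolding Pz_def by (rule prod.distrib)
  finally show ?thesis unfolding V0_def by simp
qed

definition rowst :: "nat \<Rightarrow> (nat \<Rightarrow> nat \<Rightarrow> complex) \<Rightarrow> (nat \<Rightarrow> nat) \<Rightarrow> complex" where
  "rowst N g j = (\<Prod>a<N. g a (j a))"

definition actK :: "complex mat \<Rightarrow> (nat \<Rightarrow> complex) \<Rightarrow> (nat \<Rightarrow> complex)" where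
  "actK K s = (\<lambda>\<beta>. \<Sum>\<alpha><3. s \<alpha> * K $$ (\<alpha>, \<beta>))"

lemma prod_sum_idx: fixes f :: "nat \<Rightarrow> nat \<Rightarrow> complex" shows "(\<Prod>a<N. \<Sum>\<alpha><3. f a \<alpha>) = (\<Sum>h\<in>idx N. \<Prod>a<N. f a (h a))"
proof -
  have "(\<Prod>a<N. \<Sum>\<alpha><3. f a \<alpha>) = (\<Sum>g\<in>PiE {..<N} (\<lambda>_. {..<3}). \<Prod>a<N. f a (g a))"
    using prod_sum_PiE[of "{..<N}" "\<lambda>_. {..<3::nat}" f] by simp
  also have "\<dots> = (\<Sum>h\<in>idx N. \<Prod>a<N. f a (h a))"
  proof (rule sum.reindex_bij_witness[where i="\<lambda>h. restrict h {..<N}" and j="\<lambda>g a. if a < N then g a else 0"])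
    fix g assume g: "g \<in> PiE {..<N} (\<lambda>_. {..<3::nat})"
    show "restrict (\<lambda>a. if a < N then g a else 0) {..<N} = g"
      using g by (auto simp: PiE_def extensional_def)
    show "(\<lambda>a. if a < N then g a else 0) \<in> idx N"
      using g by (auto simp: idx_def)
    show "(\<Prod>a<N. f a (if a < N then g a else 0)) = (\<Prod>a<N. f a (g a))"
      by (rule prod.cong) auto
  next
    fix h assume h: "h \<in> idx N"
    show "(\<lambda>a. if a < N then restrict h {..<N} a else 0) = h"
      using h by (auto simp: idx_def)
    show "restrict h {..<N} \<in> PiE {..<N} (\<lambda>_. {..<3})"
      using h by (auto simp: idx_def)
  qed
  finally show ?thesis .
qed

lemma V0_act:
  assumes k: "k < N" and j: "j \<in> idx N"
  shows "covec_act N (V0 N K k) (rowst N g) j = rowst N (g(k := actK K (g k))) j"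
proof -
  define H where "H a \<alpha> = (if a = k then K $$ (\<alpha>, j k) else if \<alpha> = j a then 1 else 0)" for a \<alpha>
  define Gf where "Gf a \<alpha> = g a \<alpha> * H a \<alpha>" for a \<alpha>
  have trm: "rowst N g i * V0 N K k i j = (\<Prod>a<N. Gf a (i a))" for i
  proof -
    have "(\<Prod>a<N. H a (i a)) = H k (i k) * (\<Prod>a\<in>{..<N}-{k}. H a (i a))"
      by (rule prod.remove) (use k in auto)
    also have "(\<Prod>a\<in>{..<N}-{k}. H a (i a)) = (\<Prod>a\<in>{..<N}-{k}. if i a = j a then 1 else 0)"
      by (rule prod.cong) (auto simp: H_def)
    finally have "(\<Prod>a<N. H a (i a)) = V0 N K k i j" by (simp add: V0_def H_def)
    then show ?thesis unfolding Gf_def rowst_def by (simp add: prod.distrib)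
  qed
  have "covec_act N (V0 N K k) (rowst N g) j = (\<Sum>i\<in>idx N. \<Prod>a<N. Gf a (i a))"
    unfolding covec_act_def using trm by simp
  also have "\<dots> = (\<Prod>a<N. \<Sum>\<alpha><3. Gf a \<alpha>)" by (rule prod_sum_idx[symmetric])
  also have "\<dots> = (\<Prod>a<N. (g(k := actK K (g k))) a (j a))"
  proof (rule prod.cong[OF refl])
    fix a assume a: "a \<in> {..<N}"
    show "(\<Sum>\<alpha><3. Gf a \<alpha>) = (g(k := actK K (g k))) a (j a)"
    proof (cases "a = k")
      case True then show ?thesis by (simp add: Gf_def H_def actK_def)
    next
      case False
      have "(\<Sum>\<alpha><3. Gf a \<alpha>) = (\<Sum>\<alpha><3. if \<alpha> = j a then g a \<alpha> else 0)"
        by (rule sum.cong) (auto simp: Gf_def H_def False)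
      also have "\<dots> = g a (j a)" using idxD[OF j, of a] a by (simp add: sum.delta')
      finally show ?thesis using False by simp
    qed
  qed
  finally show ?thesis unfolding rowst_def .
qed

lemma V0_pow:
  assumes k: "k < N"
  shows "j \<in> idx N \<Longrightarrow> (covec_act N (V0 N K k) ^^ m) (rowst N g) j = rowst N (g(k := (actK K ^^ m) (g k))) j"
proof (induction m arbitrary: j)
  case 0 then show ?case by (simp add: fun_upd_idem)
next
  case (Suc m)
  have "(covec_act N (V0 N K k) ^^ Suc m) (rowst N g) j
     = covec_act N (V0 N K k) ((covec_act N (V0 N K k) ^^ m) (rowst N g)) j" by simp
  also have "\<dots> = covec_act N (V0 N K k) (rowst N (g(k := (actK K ^^ m) (g k)))) j"
    by (rule covec_act_cong2) (use Suc in \<open>simp add: fun_upd_def\<close>)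
  also have "\<dots> = rowst N ((g(k := (actK K ^^ m) (g k)))(k := actK K ((actK K ^^ m) (g k)))) j"
    using V0_act[OF k Suc.prems] by simp
  also have "\<dots> = rowst N (g(k := (actK K ^^ Suc m) (g k))) j" by simp
  finally show ?case .
qed

lemma V0_sovg:
  shows "M \<le> N \<Longrightarrow> j \<in> idx N \<Longrightarrow> sovg N (V0 N K) (rowst N g) h M j = rowst N (\<lambda>a. if a < M then (actK K ^^ h a) (g a) else g a) j"
proof (induction M arbitrary: j)
  case 0 then show ?case by simp
next
  case (Suc M)
  define gM where "gM = (\<lambda>a. if a < M then (actK K ^^ h a) (g a) else g a)"
  have "sovg N (V0 N K) (rowst N g) h (Suc M) j = (covec_act N (V0 N K M) ^^ h M) (sovg N (V0 N K) (rowst N g) h M) j"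
    by simp
  also have "\<dots> = (covec_act N (V0 N K M) ^^ h M) (rowst N gM) j"
    by (rule pow_cong2) (use Suc in \<open>auto simp: gM_def\<close>)
  also have "\<dots> = rowst N (gM(M := (actK K ^^ h M) (gM M))) j"
    by (rule V0_pow) (use Suc in auto)
  also have "gM(M := (actK K ^^ h M) (gM M)) = (\<lambda>a. if a < Suc M then (actK K ^^ h a) (g a) else g a)"
    by (auto simp: gM_def)
  finally show ?case .
qed

lemma rowst_spans:
  assumes cyc: "\<And>\<beta>. \<beta> < 3 \<Longrightarrow> \<exists>c. \<forall>\<gamma><3. (\<Sum>l<3. c l * (actK K ^^ l) s \<gamma>) = (if \<gamma> = \<beta> then 1 else 0)"
  shows "spans N (\<lambda>h. rowst N (\<lambda>a. (actK K ^^ h a) s))"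
  unfolding spans_def
proof
  fix w :: "(nat \<Rightarrow> nat) \<Rightarrow> complex"
  obtain C where C: "\<And>\<beta> \<gamma>. \<beta> < 3 \<Longrightarrow> \<gamma> < 3 \<Longrightarrow> (\<Sum>l<3. C \<beta> l * (actK K ^^ l) s \<gamma>) = (if \<gamma> = \<beta> then 1 else 0)"
    using cyc by metis
  define c where "c h = (\<Sum>j'\<in>idx N. w j' * (\<Prod>a<N. C (j' a) (h a)))" for h
  show "\<exists>c. \<forall>j\<in>idx N. w j = (\<Sum>h\<in>idx N. c h * rowst N (\<lambda>a. (actK K ^^ h a) s) j)"
  proof (intro exI ballI)
    fix j assume j: "j \<in> idx N"
    have "(\<Sum>h\<in>idx N. c h * rowst N (\<lambda>a. (actK K ^^ h a) s) j)
        = (\<Sum>h\<in>idx N. \<Sum>j'\<in>idx N. w j' * (\<Prod>a<N. C (j' a) (h a) * (actK K ^^ h a) s (j a)))"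
      unfolding c_def rowst_def by (simp add: sum_distrib_right prod.distrib mult.assoc)
    also have "\<dots> = (\<Sum>j'\<in>idx N. w j' * (\<Sum>h\<in>idx N. \<Prod>a<N. C (j' a) (h a) * (actK K ^^ h a) s (j a)))"
      by (subst sum.swap) (simp add: sum_distrib_left)
    also have "\<dots> = (\<Sum>j'\<in>idx N. w j' * (\<Prod>a<N. \<Sum>l<3. C (j' a) l * (actK K ^^ l) s (j a)))"
      by (simp add: prod_sum_idx)
    also have "\<dots> = (\<Sum>j'\<in>idx N. w j' * (if j' = j then 1 else 0))"
    proof (rule sum.cong[OF refl])
      fix j' assume j': "j' \<in> idx N"
      have "(\<Prod>a<N. \<Sum>l<3. C (j' a) l * (actK K ^^ l) s (j a)) = (\<Prod>a<N. if j a = j' a then 1 else 0)"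
        by (rule prod.cong) (use idxD[OF j] idxD[OF j'] C in auto)
      also have "\<dots> = (if j' = j then 1 else 0)"
      proof (cases "j' = j")
        case False
        then obtain a where a: "j' a \<noteq> j a" by auto
        have "a < N" using a idxD2[OF j, of a] idxD2[OF j', of a] by (metis not_less)
        then show ?thesis using False a by (auto intro!: prod_zero)
      qed simp
      finally show "w j' * (\<Prod>a<N. \<Sum>l<3. C (j' a) l * (actK K ^^ l) s (j a)) = w j' * (if j' = j then 1 else 0)"
        by simp
    qed
    also have "\<dots> = (\<Sum>j'\<in>idx N. if j' = j then w j' else 0)" by (rule sum.cong) auto
    also have "\<dots> = w j" using j by (simp add: finite_idx)
    finally show "w j = (\<Sum>h\<in>idx N. c h * rowst N (\<lambda>a. (actK K ^^ h a) s) j)" by simp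
  qed
qed



definition det3 :: "(nat \<Rightarrow> nat \<Rightarrow> complex) \<Rightarrow> complex" where
  "det3 a = a 0 0 * (a 1 1 * a 2 2 - a 1 2 * a 2 1) - a 0 1 * (a 1 0 * a 2 2 - a 1 2 * a 2 0)
          + a 0 2 * (a 1 0 * a 2 1 - a 1 1 * a 2 0)"

lemma sum3: "(\<Sum>l<(3::nat). f l) = f 0 + f 1 + (f 2 :: complex)"
  by (simp add: eval_nat_numeral)

lemma less3: "(\<alpha>::nat) < 3 \<longleftrightarrow> \<alpha> = 0 \<or> \<alpha> = 1 \<or> \<alpha> = 2"
  by auto

lemma key0: "(\<Sum>l<3. det3 (\<lambda>\<alpha> l'. if l' = l then r \<alpha> else q l' \<alpha>) * q l 0) = r 0 * det3 (\<lambda>\<alpha> l. q l \<alpha>)"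
  unfolding sum3 det3_def by (simp add: algebra_simps)
lemma key1: "(\<Sum>l<3. det3 (\<lambda>\<alpha> l'. if l' = l then r \<alpha> else q l' \<alpha>) * q l 1) = r 1 * det3 (\<lambda>\<alpha> l. q l \<alpha>)"
  unfolding sum3 det3_def by (simp add: algebra_simps)
lemma key2: "(\<Sum>l<3. det3 (\<lambda>\<alpha> l'. if l' = l then r \<alpha> else q l' \<alpha>) * q l 2) = r 2 * det3 (\<lambda>\<alpha> l. q l \<alpha>)"
  unfolding sum3 det3_def by (simp add: algebra_simps)
lemma key: 
  assumes "\<beta> < 3"
  shows "(\<Sum>l<3. det3 (\<lambda>\<alpha> l'. if l' = l then r \<alpha> else q l' \<alpha>) * q l \<beta>) = r \<beta> * det3 (\<lambda>\<alpha> l. q l \<alpha>)"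
proof -
  have "\<beta> = 0 \<or> \<beta> = 1 \<or> \<beta> = 2" using assms by auto
  then show ?thesis using key0 key1 key2 by auto
qed
lemma solve3:
  assumes d: "det3 (\<lambda>\<alpha> l. q l \<alpha>) \<noteq> 0"
  shows "\<exists>c. \<forall>\<alpha><3. (\<Sum>l<3. c l * q l \<alpha>) = r \<alpha>"
proof (intro exI allI impI)
  fix \<alpha> :: nat assume a: "\<alpha> < 3"
  have "(\<Sum>l<3. det3 (\<lambda>\<alpha> l'. if l' = l then r \<alpha> else q l' \<alpha>) / det3 (\<lambda>\<alpha> l. q l \<alpha>) * q l \<alpha>)
     = (\<Sum>l<3. det3 (\<lambda>\<alpha> l'. if l' = l then r \<alpha> else q l' \<alpha>) * q l \<alpha>) / det3 (\<lambda>\<alpha> l. q l \<alpha>)"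
    by (simp add: sum_divide_distrib)
  also have "\<dots> = r \<alpha>" using key[OF a] d by simp
  finally show "(\<Sum>l<3. det3 (\<lambda>\<alpha> l'. if l' = l then r \<alpha> else q l' \<alpha>) / det3 (\<lambda>\<alpha> l. q l \<alpha>) * q l \<alpha>) = r \<alpha>" .
qed

lemma actKJ:
  "actK (KJ k0 k1 k2 y1 y2) q 0 = q 0 * k0"
  "actK (KJ k0 k1 k2 y1 y2) q 1 = q 0 * y1 + q 1 * k1"
  "actK (KJ k0 k1 k2 y1 y2) q 2 = q 1 * y2 + q 2 * k2"
  "actK (KJ k0 k1 k2 y1 y2) q (Suc 0) = q 0 * y1 + q 1 * k1"
  by (simp_all add: actK_def KJ_def sum3)

lemma pw: "(f ^^ 0) v = v" "(f ^^ 1) v = f v" "(f ^^ 2) v = f (f v)"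
  by (simp_all add: numeral_2_eq_2)

lemma cyc_det:
  fixes x y z :: complex
  defines "u \<equiv> (\<lambda>\<alpha>::nat. if \<alpha> = 0 then x else if \<alpha> = 1 then y else z)"
  assumes cases: "(k0 \<noteq> k1 \<and> k0 \<noteq> k2 \<and> k1 \<noteq> k2 \<and> y1 = 0 \<and> y2 = 0 \<and> x * y * z \<noteq> 0)
             \<or> (k0 = k1 \<and> k1 \<noteq> k2 \<and> y1 = 1 \<and> y2 = 0 \<and> x * z \<noteq> 0)
             \<or> (k0 = k1 \<and> k1 = k2 \<and> y1 = 1 \<and> y2 = 1 \<and> x \<noteq> 0)"
  shows "det3 (\<lambda>\<alpha> l. (actK (KJ k0 k1 k2 y1 y2) ^^ l) u \<alpha>) \<noteq> 0"
proof -
  have u: "u 0 = x" "u 1 = y" "u 2 = z" by (simp_all add: u_def)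
  have e: "det3 (\<lambda>\<alpha> l. (actK (KJ k0 k1 k2 y1 y2) ^^ l) u \<alpha>) =
    x * ((x * y1 + y * k1) * ((x * y1 + y * k1) * y2 + (y * y2 + z * k2) * k2) - (y * y2 + z * k2) * ((x * k0) * y1 + (x * y1 + y * k1) * k1))
  - (x * k0) * (y * ((x * y1 + y * k1) * y2 + (y * y2 + z * k2) * k2) - ((x * k0) * y1 + (x * y1 + y * k1) * k1) * z)
  + (x * k0 * k0) * (y * (y * y2 + z * k2) - (x * y1 + y * k1) * z)"
    unfolding det3_def by (simp only: pw actKJ u) (simp add: algebra_simps)
  show ?thesis
    using cases
  proof (elim disjE conjE)
    assume h: "k0 \<noteq> k1" "k0 \<noteq> k2" "k1 \<noteq> k2" "y1 = 0" "y2 = 0" "x * y * z \<noteq> 0"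
    have "det3 (\<lambda>\<alpha> l. (actK (KJ k0 k1 k2 y1 y2) ^^ l) u \<alpha>) = x * y * z * (k1 - k0) * (k2 - k0) * (k2 - k1)"
      unfolding e unfolding h(4,5) by (simp add: algebra_simps)
    then show ?thesis using h by simp
  next
    assume h: "k0 = k1" "k1 \<noteq> k2" "y1 = 1" "y2 = 0" "x * z \<noteq> 0"
    have "det3 (\<lambda>\<alpha> l. (actK (KJ k0 k1 k2 y1 y2) ^^ l) u \<alpha>) = x * x * z * (k2 - k0) * (k2 - k0)"
      unfolding e unfolding h(1,3,4) by (simp add: algebra_simps)
    then show ?thesis using h by simp
  next
    assume h: "k0 = k1" "k1 = k2" "y1 = 1" "y2 = 1" "x \<noteq> 0"
    have "det3 (\<lambda>\<alpha> l. (actK (KJ k0 k1 k2 y1 y2) ^^ l) u \<alpha>) = x * x * x"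
      unfolding e unfolding h(1,2,3,4) by (simp add: algebra_simps)
    then show ?thesis using h by simp
  qed
qed


lemma mult3: "A \<in> carrier_mat 3 3 \<Longrightarrow> B \<in> carrier_mat 3 3 \<Longrightarrow> \<alpha> < 3 \<Longrightarrow> \<beta> < 3 \<Longrightarrow>
   (A * B) $$ (\<alpha>, \<beta>) = (\<Sum>i<3. A $$ (\<alpha>, i) * B $$ (i, \<beta>))"
  by (simp add: scalar_prod_def atLeast0LessThan)

lemma actK_mult:
  assumes "A \<in> carrier_mat 3 3" "B \<in> carrier_mat 3 3" "\<beta> < 3"
  shows "actK B (actK A q) \<beta> = actK (A * B) q \<beta>"
proof -
  have "actK B (actK A q) \<beta> = (\<Sum>i<3. \<Sum>\<alpha><3. q \<alpha> * A $$ (\<alpha>, i) * B $$ (i, \<beta>))"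
    unfolding actK_def by (simp add: sum_distrib_right)
  also have "\<dots> = (\<Sum>\<alpha><3. \<Sum>i<3. q \<alpha> * A $$ (\<alpha>, i) * B $$ (i, \<beta>))"
    by (rule sum.swap)
  also have "\<dots> = actK (A * B) q \<beta>"
    unfolding actK_def
  proof (rule sum.cong[OF refl])
    fix \<alpha> assume "\<alpha> \<in> {..<3::nat}"
    then show "(\<Sum>i<3. q \<alpha> * A $$ (\<alpha>, i) * B $$ (i, \<beta>)) = q \<alpha> * (A * B) $$ (\<alpha>, \<beta>)"
      by (subst mult3[OF assms(1,2) _ assms(3)]) (simp_all add: sum_distrib_left mult.assoc)
  qed
  finally show ?thesis .
qed

lemma actK_cong: "(\<And>\<alpha>. \<alpha> < 3 \<Longrightarrow> q \<alpha> = q' \<alpha>) \<Longrightarrow> actK M q = actK M q'"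
  unfolding actK_def by auto

lemma pow_conj:
  assumes K: "K = W * J * Wi" and c: "W \<in> carrier_mat 3 3" "Wi \<in> carrier_mat 3 3" "J \<in> carrier_mat 3 3"
    and inv: "Wi * W = 1\<^sub>m 3"
  shows "\<beta> < 3 \<Longrightarrow> (actK K ^^ l) (actK Wi u) \<beta> = actK Wi ((actK J ^^ l) u) \<beta>"
proof (induction l arbitrary: \<beta>)
  case 0 then show ?case by simp
next
  case (Suc l)
  have Kc: "K \<in> carrier_mat 3 3" using K c by auto
  have WK: "Wi * K = J * Wi"
  proof -
    have "Wi * K = Wi * ((W * J) * Wi)" using K by simp
    also have "\<dots> = (Wi * (W * J)) * Wi" by (rule assoc_mult_mat[symmetric]) (use c in auto)
    also have "Wi * (W * J) = (Wi * W) * J" by (rule assoc_mult_mat[symmetric]) (use c in auto)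
    also have "\<dots> = J" using inv c by simp
    finally show ?thesis .
  qed
  have "(actK K ^^ Suc l) (actK Wi u) \<beta> = actK K ((actK K ^^ l) (actK Wi u)) \<beta>" by simp
  also have "\<dots> = actK K (actK Wi ((actK J ^^ l) u)) \<beta>"
    by (subst actK_cong[where q'="actK Wi ((actK J ^^ l) u)"]) (use Suc in auto)
  also have "\<dots> = actK (Wi * K) ((actK J ^^ l) u) \<beta>"
    by (rule actK_mult) (use c Kc Suc in auto)
  also have "\<dots> = actK Wi (actK J ((actK J ^^ l) u)) \<beta>"
    unfolding WK by (rule actK_mult[symmetric]) (use c Suc in auto)
  finally show ?case by simp
qed

lemma KJ_carrier: "KJ k0 k1 k2 y1 y2 \<in> carrier_mat 3 3"
  by (simp add: KJ_def)

lemma cyc: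
  fixes x y z :: complex
  defines "u \<equiv> (\<lambda>\<alpha>::nat. if \<alpha> = 0 then x else if \<alpha> = 1 then y else z)"
  assumes cases: "(k0 \<noteq> k1 \<and> k0 \<noteq> k2 \<and> k1 \<noteq> k2 \<and> y1 = 0 \<and> y2 = 0 \<and> x * y * z \<noteq> 0)
             \<or> (k0 = k1 \<and> k1 \<noteq> k2 \<and> y1 = 1 \<and> y2 = 0 \<and> x * z \<noteq> 0)
             \<or> (k0 = k1 \<and> k1 = k2 \<and> y1 = 1 \<and> y2 = 1 \<and> x \<noteq> 0)"
    and K: "K = W * KJ k0 k1 k2 y1 y2 * Wi" and c: "W \<in> carrier_mat 3 3" "Wi \<in> carrier_mat 3 3"
    and inv: "Wi * W = 1\<^sub>m 3" "W * Wi = 1\<^sub>m 3"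
    and b: "\<beta> < 3"
  shows "\<exists>c. \<forall>\<gamma><3. (\<Sum>l<3. c l * (actK K ^^ l) (actK Wi u) \<gamma>) = (if \<gamma> = \<beta> then 1 else 0)"
proof -
  let ?KJ = "KJ k0 k1 k2 y1 y2"
  define q where "q l = (actK ?KJ ^^ l) u" for l
  have d: "det3 (\<lambda>\<alpha> l. q l \<alpha>) \<noteq> 0"
    unfolding q_def u_def by (rule cyc_det[OF cases])
  obtain cc where cc: "\<And>\<alpha>. \<alpha> < 3 \<Longrightarrow> (\<Sum>l<3. cc l * q l \<alpha>) = W $$ (\<beta>, \<alpha>)"
    using solve3[OF d, of "\<lambda>\<alpha>. W $$ (\<beta>, \<alpha>)"] by blast
  show ?thesis
  proof (intro exI allI impI)
    fix \<gamma> :: nat assume g: "\<gamma> < 3"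
    have "(\<Sum>l<3. cc l * (actK K ^^ l) (actK Wi u) \<gamma>) = (\<Sum>l<3. cc l * (\<Sum>\<alpha><3. q l \<alpha> * Wi $$ (\<alpha>, \<gamma>)))"
      using pow_conj[OF K c(1,2) KJ_carrier inv(1) g] by (simp add: q_def actK_def)
    also have "\<dots> = (\<Sum>l<3. \<Sum>\<alpha><3. cc l * q l \<alpha> * Wi $$ (\<alpha>, \<gamma>))"
      by (simp add: sum_distrib_left mult.assoc)
    also have "\<dots> = (\<Sum>\<alpha><3. \<Sum>l<3. cc l * q l \<alpha> * Wi $$ (\<alpha>, \<gamma>))"
      by (rule sum.swap)
    also have "\<dots> = (\<Sum>\<alpha><3. (\<Sum>l<3. cc l * q l \<alpha>) * Wi $$ (\<alpha>, \<gamma>))"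
      by (simp add: sum_distrib_right)
    also have "\<dots> = (\<Sum>\<alpha><3. W $$ (\<beta>, \<alpha>) * Wi $$ (\<alpha>, \<gamma>))"
      using cc by simp
    also have "\<dots> = (W * Wi) $$ (\<beta>, \<gamma>)" using mult3[OF c b g] by simp
    also have "\<dots> = (if \<gamma> = \<beta> then 1 else 0)" using inv(2) b g by simp
    finally show "(\<Sum>l<3. cc l * (actK K ^^ l) (actK Wi u) \<gamma>) = (if \<gamma> = \<beta> then 1 else 0)" .
  qed
qed



lemma spans_cong: "spans N v \<Longrightarrow> (\<And>h j. h \<in> idx N \<Longrightarrow> j \<in> idx N \<Longrightarrow> v h j = v' h j) \<Longrightarrow> spans N v'"
  unfolding spans_def by (metis (no_types, lifting) sum.cong)

lemma gpoly_Vt: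
  assumes "gpoly B e"
  shows "gpoly B (\<lambda>y. Vt N K (e y) \<zeta> k ou i)"
  unfolding Vt_def
  by (intro gpoly_sum gpoly_prod gpoly.gmult gpoly.gconst gpoly_if gpoly_Rel assms finite_idx) auto

lemma exists_good_xi:
  assumes cyc: "\<And>\<beta>. \<beta> < 3 \<Longrightarrow> \<exists>c. \<forall>\<gamma><3. (\<Sum>l<3. c l * (actK K ^^ l) s \<gamma>) = (if \<gamma> = \<beta> then 1 else 0)"
    and eta: "\<eta> \<noteq> 0"
  shows "\<exists>\<xi>0. Dfun N K \<eta> \<xi>0 (rowst N (\<lambda>_. s)) \<noteq> 0"
proof -
  define S where "S = rowst N (\<lambda>_. s)"
  define \<zeta> :: "nat \<Rightarrow> complex" where "\<zeta> n = of_nat n" for n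
  define F where "F e = Determinant.det (Amat N (\<lambda>h. sovg N (\<lambda>k. Vt N K e \<zeta> k) S h N))" for e
  have gF: "gpoly {\<lambda>e. e} F"
    unfolding F_def
  proof (rule gpoly_Amat_det, rule gpoly_sovg[where T="\<lambda>e k. Vt N K e \<zeta> k"])
    fix k i j show "gpoly {\<lambda>e. e} (\<lambda>e. Vt N K e \<zeta> k i j)"
      by (rule gpoly_Vt) (rule gbase, simp)
  qed (rule gpoly.gconst)
  have contF: "continuous_on UNIV F"
    by (rule gpoly_continuous[OF gF]) (auto intro: continuous_intros)
  have Pz_nz: "Pz \<zeta> N k \<noteq> 0" for k
    unfolding Pz_def \<zeta>_def by (auto simp: prod_zero_iff)
  have F0: "F 0 \<noteq> 0"
  proof -
    have sp: "spans N (\<lambda>h. rowst N (\<lambda>a. (actK K ^^ h a) s))" by (rule rowst_spans[OF cyc])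
    have "spans N (\<lambda>h j. (\<Prod>m<N. Pz \<zeta> N m ^ h m) * rowst N (\<lambda>a. (actK K ^^ h a) s) j)"
      by (rule spans_scale[OF sp]) (simp add: Pz_nz)
    then have "spans N (\<lambda>h. sovg N (\<lambda>k. Vt N K 0 \<zeta> k) S h N)"
    proof (rule spans_cong)
      fix h j assume h: "h \<in> idx N" and j: "j \<in> idx N"
      have "sovg N (\<lambda>k. Vt N K 0 \<zeta> k) S h N j = sovg N (\<lambda>k i j. Pz \<zeta> N k * V0 N K k i j) S h N j"
        by (rule sovg_cong2) (use j Vt_zero in auto)
      also have "\<dots> = (\<Prod>m<N. Pz \<zeta> N m ^ h m) * sovg N (V0 N K) S h N j"
        by (simp add: sovg_scale[where c="Pz \<zeta> N" and T="V0 N K"])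
      also have "sovg N (V0 N K) S h N j = rowst N (\<lambda>a. if a < N then (actK K ^^ h a) s else s) j"
        unfolding S_def by (rule V0_sovg) (use j in auto)
      also have "\<dots> = rowst N (\<lambda>a. (actK K ^^ h a) s) j"
        unfolding rowst_def by (rule prod.cong) auto
      finally show "(\<Prod>m<N. Pz \<zeta> N m ^ h m) * rowst N (\<lambda>a. (actK K ^^ h a) s) j = sovg N (\<lambda>k. Vt N K 0 \<zeta> k) S h N j"
        by simp
    qed
    then show ?thesis unfolding F_def by (rule spans_det)
  qed
  have "isCont F 0" using contF by (simp add: continuous_on_eq_continuous_at)
  then have "F \<midarrow>0\<rightarrow> F 0" by (simp add: isCont_def)
  then have "eventually (\<lambda>e. F e \<noteq> 0) (at 0)"
    using F0 by (rule tendsto_imp_eventually_ne)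
  then obtain d where d: "d > 0" "\<And>e. e \<noteq> 0 \<Longrightarrow> dist e 0 < d \<Longrightarrow> F e \<noteq> 0"
    unfolding eventually_at by auto
  define \<epsilon> :: complex where "\<epsilon> = of_real (d / 2)"
  have eps: "\<epsilon> \<noteq> 0" "F \<epsilon> \<noteq> 0"
    using d by (auto simp: \<epsilon>_def dist_norm intro!: d(2))
  define t where "t = \<eta> / \<epsilon>"
  have t: "t \<noteq> 0" "\<eta> / t = \<epsilon>" using eps eta by (auto simp: t_def)
  have spV: "spans N (\<lambda>h. sovg N (\<lambda>k. Vt N K \<epsilon> \<zeta> k) S h N)"
    using eps(2) unfolding F_def by (rule det_spans)
  have "spans N (\<lambda>h j. (\<Prod>m<N. (t ^ N * \<epsilon>) ^ h m) * sovg N (\<lambda>k. Vt N K \<epsilon> \<zeta> k) S h N j)"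
    by (rule spans_scale[OF spV]) (use t eps in simp)
  then have "spans N (sov_covec N K \<eta> (\<lambda>n. t * \<zeta> n) S)"
  proof (rule spans_cong)
    fix h j assume h: "h \<in> idx N" and j: "j \<in> idx N"
    have "sov_covec N K \<eta> (\<lambda>n. t * \<zeta> n) S h j = sovg N (\<lambda>k. transfer N K \<eta> (\<lambda>n. t * \<zeta> n) (t * \<zeta> k)) S h N j"
      unfolding sov_covec_def sov_aux_sovg by simp
    also have "\<dots> = sovg N (\<lambda>k i j. (t ^ N * \<epsilon>) * Vt N K \<epsilon> \<zeta> k i j) S h N j"
    proof (rule sovg_cong2[OF _ _ j])
      fix k i j' assume "k < N"
      then show "transfer N K \<eta> (\<lambda>n. t * \<zeta> n) (t * \<zeta> k) i j' = (t ^ N * \<epsilon>) * Vt N K \<epsilon> \<zeta> k i j'"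
        using transfer_scale[OF t(1), of N K \<eta> \<zeta> "\<zeta> k" i j'] transfer_V[of k N K \<epsilon> \<zeta> i j'] t(2)
        by simp
    qed simp
    also have "\<dots> = (\<Prod>m<N. (t ^ N * \<epsilon>) ^ h m) * sovg N (\<lambda>k. Vt N K \<epsilon> \<zeta> k) S h N j"
      by (simp add: sovg_scale[where c="\<lambda>_. t ^ N * \<epsilon>" and T="\<lambda>k. Vt N K \<epsilon> \<zeta> k"])
    finally show "(\<Prod>m<N. (t ^ N * \<epsilon>) ^ h m) * sovg N (\<lambda>k. Vt N K \<epsilon> \<zeta> k) S h N j = sov_covec N K \<eta> (\<lambda>n. t * \<zeta> n) S h j"
      by simp
  qed
  then have "Dfun N K \<eta> (\<lambda>n. t * \<zeta> n) S \<noteq> 0"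
    unfolding Dfun_def by (rule spans_det)
  then show ?thesis unfolding S_def by blast
qed



lemma tensor_rowst: "tensor_state N Wi x y z = rowst N (\<lambda>_. actK Wi (\<lambda>\<alpha>::nat. if \<alpha> = 0 then x else if \<alpha> = 1 then y else z))"
  unfolding tensor_state_def rowst_def actK_def by simp

lemma basis_ae_xi:
  assumes "Dfun N K \<eta> \<xi>0 S \<noteq> 0"
  shows "AE \<xi> in PiM {..<N} (\<lambda>_. lborel). Dfun N K \<eta> \<xi> S \<noteq> 0"
proof (rule poly_ae[of "{..<N}" "\<lambda>\<xi>. Dfun N K \<eta> \<xi> S" \<xi>0])
  show "gpoly (coordset {..<N}) (\<lambda>\<xi>. Dfun N K \<eta> \<xi> S)"
    by (rule gpoly_Dfun[where xi="\<lambda>y. y" and S="\<lambda>_. S"]) (auto intro: gpoly_coord gpoly.gconst)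
qed (use assms in auto)

theorem proposition5p3:
  fixes N :: nat and \<eta> :: complex and K W Wi :: "complex mat"
    and k0 k1 k2 y1 y2 :: complex
  assumes "N \<ge> 1"
    and "\<eta> \<noteq> 0"
    and "K \<in> carrier_mat 3 3" and "W \<in> carrier_mat 3 3" and "Wi \<in> carrier_mat 3 3"
    and "W * Wi = 1\<^sub>m 3" and "Wi * W = 1\<^sub>m 3"
    and "w_simple K"
    and "K = W * KJ k0 k1 k2 y1 y2 * Wi"
    and cases: "(k0 \<noteq> k1 \<and> k0 \<noteq> k2 \<and> k1 \<noteq> k2 \<and> y1 = 0 \<and> y2 = 0)
             \<or> (k0 = k1 \<and> k1 \<noteq> k2 \<and> y1 = 1 \<and> y2 = 0)
             \<or> (k0 = k1 \<and> k1 = k2 \<and> y1 = 1 \<and> y2 = 1)"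
  shows "(AE (S, \<xi>) in (PiM (idx N) (\<lambda>_. lborel)) \<Otimes>\<^sub>M (PiM {..<N} (\<lambda>_. lborel)).
            admissible N \<eta> \<xi> \<longrightarrow> covec_basis N (sov_covec N K \<eta> \<xi> S))
       \<and> (\<forall>x y z.
            ((k0 \<noteq> k1 \<and> k0 \<noteq> k2 \<and> k1 \<noteq> k2 \<and> y1 = 0 \<and> y2 = 0 \<and> x * y * z \<noteq> 0)
             \<or> (k0 = k1 \<and> k1 \<noteq> k2 \<and> y1 = 1 \<and> y2 = 0 \<and> x * z \<noteq> 0)
             \<or> (k0 = k1 \<and> k1 = k2 \<and> y1 = 1 \<and> y2 = 1 \<and> x \<noteq> 0)) \<longrightarrow>
            (AE \<xi> in PiM {..<N} (\<lambda>_. lborel).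
               admissible N \<eta> \<xi> \<longrightarrow> covec_basis N (sov_covec N K \<eta> \<xi> (tensor_state N Wi x y z))))"
proof -
  have cyc0: "\<exists>c. \<forall>\<gamma><3. (\<Sum>l<3. c l * (actK K ^^ l) (actK Wi (\<lambda>\<alpha>::nat. if \<alpha> = 0 then x else if \<alpha> = 1 then y else z)) \<gamma>) = (if \<gamma> = \<beta> then 1 else 0)"
    if "(k0 \<noteq> k1 \<and> k0 \<noteq> k2 \<and> k1 \<noteq> k2 \<and> y1 = 0 \<and> y2 = 0 \<and> x * y * z \<noteq> 0)
             \<or> (k0 = k1 \<and> k1 \<noteq> k2 \<and> y1 = 1 \<and> y2 = 0 \<and> x * z \<noteq> 0)
             \<or> (k0 = k1 \<and> k1 = k2 \<and> y1 = 1 \<and> y2 = 1 \<and> x \<noteq> 0)" "\<beta> < 3" for x y z \<beta>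
    by (rule cyc[OF that(1) assms(9) assms(4) assms(5) assms(7) assms(6) that(2)])
  have good: "\<exists>\<xi>0. Dfun N K \<eta> \<xi>0 (tensor_state N Wi x y z) \<noteq> 0"
    if "(k0 \<noteq> k1 \<and> k0 \<noteq> k2 \<and> k1 \<noteq> k2 \<and> y1 = 0 \<and> y2 = 0 \<and> x * y * z \<noteq> 0)
             \<or> (k0 = k1 \<and> k1 \<noteq> k2 \<and> y1 = 1 \<and> y2 = 0 \<and> x * z \<noteq> 0)
             \<or> (k0 = k1 \<and> k1 = k2 \<and> y1 = 1 \<and> y2 = 1 \<and> x \<noteq> 0)" for x y z
    unfolding tensor_rowst by (rule exists_good_xi[OF cyc0[OF that] assms(2)])
  have imp: "admissible N \<eta> \<xi> \<longrightarrow> covec_basis N (sov_covec N K \<eta> \<xi> S)" if "Dfun N K \<eta> \<xi> S \<noteq> 0" for \<xi> S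
    using det_basis that unfolding Dfun_def by blast
  have part2: "\<forall>x y z.
            ((k0 \<noteq> k1 \<and> k0 \<noteq> k2 \<and> k1 \<noteq> k2 \<and> y1 = 0 \<and> y2 = 0 \<and> x * y * z \<noteq> 0)
             \<or> (k0 = k1 \<and> k1 \<noteq> k2 \<and> y1 = 1 \<and> y2 = 0 \<and> x * z \<noteq> 0)
             \<or> (k0 = k1 \<and> k1 = k2 \<and> y1 = 1 \<and> y2 = 1 \<and> x \<noteq> 0)) \<longrightarrow>
            (AE \<xi> in PiM {..<N} (\<lambda>_. lborel).
               admissible N \<eta> \<xi> \<longrightarrow> covec_basis N (sov_covec N K \<eta> \<xi> (tensor_state N Wi x y z)))"
  proof (intro allI impI)
    fix x y z :: complex
    assume c: "(k0 \<noteq> k1 \<and> k0 \<noteq> k2 \<and> k1 \<noteq> k2 \<and> y1 = 0 \<and> y2 = 0 \<and> x * y * z \<noteq> 0)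
             \<or> (k0 = k1 \<and> k1 \<noteq> k2 \<and> y1 = 1 \<and> y2 = 0 \<and> x * z \<noteq> 0)
             \<or> (k0 = k1 \<and> k1 = k2 \<and> y1 = 1 \<and> y2 = 1 \<and> x \<noteq> 0)"
    obtain \<xi>0 where x0: "Dfun N K \<eta> \<xi>0 (tensor_state N Wi x y z) \<noteq> 0" using good[OF c] by blast
    show "AE \<xi> in PiM {..<N} (\<lambda>_. lborel).
               admissible N \<eta> \<xi> \<longrightarrow> covec_basis N (sov_covec N K \<eta> \<xi> (tensor_state N Wi x y z))"
      by (rule AE_mp[OF basis_ae_xi[OF x0]], rule AE_I2) (use imp in blast)
  qed
  have part1: "AE (S, \<xi>) in (PiM (idx N) (\<lambda>_. lborel)) \<Otimes>\<^sub>M (PiM {..<N} (\<lambda>_. lborel)).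
            admissible N \<eta> \<xi> \<longrightarrow> covec_basis N (sov_covec N K \<eta> \<xi> S)"
  proof -
    have c1: "(k0 \<noteq> k1 \<and> k0 \<noteq> k2 \<and> k1 \<noteq> k2 \<and> y1 = 0 \<and> y2 = 0 \<and> 1 * 1 * 1 \<noteq> (0::complex))
             \<or> (k0 = k1 \<and> k1 \<noteq> k2 \<and> y1 = 1 \<and> y2 = 0 \<and> 1 * 1 \<noteq> (0::complex))
             \<or> (k0 = k1 \<and> k1 = k2 \<and> y1 = 1 \<and> y2 = 1 \<and> 1 \<noteq> (0::complex))"
      using cases by simp
    obtain \<xi>0 where x0: "Dfun N K \<eta> \<xi>0 (tensor_state N Wi 1 1 1) \<noteq> 0" using good[OF c1] by blast
    interpret PS: product_sigma_finite "\<lambda>_. lborel :: complex measure"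
      by (simp add: product_sigma_finite_def lborel.sigma_finite_measure_axioms)
    interpret P1: finite_product_sigma_finite "\<lambda>_. lborel :: complex measure" "idx N"
      by standard (simp add: finite_idx)
    interpret P2: finite_product_sigma_finite "\<lambda>_. lborel :: complex measure" "{..<N}"
      by standard simp
    interpret PP: pair_sigma_finite "PiM (idx N) (\<lambda>_. lborel :: complex measure)" "PiM {..<N} (\<lambda>_. lborel :: complex measure)"
      by standard
    let ?M = "PiM (idx N) (\<lambda>_. lborel :: complex measure) \<Otimes>\<^sub>M PiM {..<N} (\<lambda>_. lborel :: complex measure)"
    define Bp :: "(((nat \<Rightarrow> nat) \<Rightarrow> complex) \<times> (nat \<Rightarrow> complex) \<Rightarrow> complex) set" where "Bp = {(\<lambda>p. snd p n) | n. n < N} \<union> {(\<lambda>p. fst p i) | i. i \<in> idx N}"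
    have gD: "gpoly Bp (\<lambda>p. Dfun N K \<eta> (snd p) (fst p))"
      by (rule gpoly_Dfun[where xi="\<lambda>p. snd p" and S="\<lambda>p. fst p"]) (auto intro!: gbase simp: Bp_def)
    have mD[measurable]: "(\<lambda>p. Dfun N K \<eta> (snd p) (fst p)) \<in> borel_measurable ?M"
    proof (rule gpoly_measurable[OF gD])
      fix b assume "b \<in> Bp"
      then consider (s) n where "n < N" "b = (\<lambda>p. snd p n)" | (f) i where "i \<in> idx N" "b = (\<lambda>p. fst p i)"
        unfolding Bp_def by blast
      then show "b \<in> borel_measurable ?M"
      proof cases
        case s
        have "(\<lambda>x. x n) \<in> borel_measurable (PiM {..<N} (\<lambda>_. lborel :: complex measure))"
          using measurable_component_singleton[of n "{..<N}" "\<lambda>_. lborel :: complex measure"] s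
          by (simp add: measurable_lborel1)
        then show ?thesis using s by (simp add: measurable_compose[OF measurable_snd])
      next
        case f
        have "(\<lambda>x. x i) \<in> borel_measurable (PiM (idx N) (\<lambda>_. lborel :: complex measure))"
          using measurable_component_singleton[of i "idx N" "\<lambda>_. lborel :: complex measure"] f
          by (simp add: measurable_lborel1)
        then show ?thesis using f by (simp add: measurable_compose[OF measurable_fst])
      qed
    qed
    have AES: "AE S in PiM (idx N) (\<lambda>_. lborel). Dfun N K \<eta> \<xi>0 S \<noteq> 0"
    proof (rule poly_ae[of "idx N" "\<lambda>S. Dfun N K \<eta> \<xi>0 S" "tensor_state N Wi 1 1 1"])
      show "gpoly (coordset (idx N)) (\<lambda>S. Dfun N K \<eta> \<xi>0 S)"
        by (rule gpoly_Dfun[where xi="\<lambda>_. \<xi>0" and S="\<lambda>y. y"]) (auto intro: gpoly_coord gpoly.gconst)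
    qed (use x0 finite_idx in auto)
    have "AE p in ?M. Dfun N K \<eta> (snd p) (fst p) \<noteq> 0"
    proof (rule PP.AE_pair_measure)
      show "{p \<in> space ?M. Dfun N K \<eta> (snd p) (fst p) \<noteq> 0} \<in> sets ?M" by measurable
      show "AE S in PiM (idx N) (\<lambda>_. lborel). AE \<xi> in PiM {..<N} (\<lambda>_. lborel). Dfun N K \<eta> (snd (S, \<xi>)) (fst (S, \<xi>)) \<noteq> 0"
        by (rule AE_mp[OF AES], rule AE_I2) (use basis_ae_xi in auto)
    qed
    then show ?thesis by (rule AE_mp, intro AE_I2) (use imp in auto)
  qed
  show ?thesis using part1 part2 by blast
qed


end
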